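(* Let $X$ be a compact metric space and $(f_n)_{n\ge1}$ a sequence of continuous maps $X\to X$. Then for all $p,q\in\mathbb{N}^*$ and all $x\in X$, $$f_1^{p+q}(x)=q\text{-}\lim_{n\to\infty}f_1^{p+n}(x).$$
   Context: $\mathbb{N}=\{1,2,\dots\}$, $\beta(\mathbb{N})$ the ultrafilters on $\mathbb{N}$, $\mathbb{N}^*$ the free ones. For $r\in\mathbb{N}^*$, $r\text{-}\lim_n x_n$ is the unique $y$ with $\{n:x_n\in V\}\in r$ for all neighbourhoods $V$ of $y$. $f_1^n=f_n\circ\cdots\circ f_1$ and $f_1^r(x)=r\text{-}\lim_n f_1^n(x)$ for $r\in\mathbb{N}^*$. Addition: $p+n=\{A:\{m:m+n\in A\}\in p\}$ and $p+q=\{A:\{n:\{m:m+n\in A\}\in p\}\in q\}$; for $p\in\mathbb{N}^*$ these are free ultrafilters. *)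

theory Defs
  imports "HOL-Analysis.Analysis"
begin

definition ultrafilter_nat :: "nat set set \<Rightarrow> bool" where
  "ultrafilter_nat U \<longleftrightarrow>
     UNIV \<in> U \<and> {} \<notin> U \<and>
     (\<forall>A B. A \<in> U \<and> A \<subseteq> B \<longrightarrow> B \<in> U) \<and>
     (\<forall>A B. A \<in> U \<and> B \<in> U \<longrightarrow> A \<inter> B \<in> U) \<and>
     (\<forall>A. A \<in> U \<or> - A \<in> U)"

definition free_ultrafilter_nat :: "nat set set \<Rightarrow> bool" where
  "free_ultrafilter_nat U \<longleftrightarrow> ultrafilter_nat U \<and> \<Inter> U = {}"

definition ulim :: "nat set set \<Rightarrow> (nat \<Rightarrow> 'a::topological_space) \<Rightarrow> 'a" where
  "ulim r s = (THE y. \<forall>V. open V \<and> y \<in> V \<longrightarrow> {n. s n \<in> V} \<in> r)"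

definition uplus_nat :: "nat set set \<Rightarrow> nat \<Rightarrow> nat set set" where
  "uplus_nat p n = {A. {m. m + n \<in> A} \<in> p}"

definition uplus :: "nat set set \<Rightarrow> nat set set \<Rightarrow> nat set set" where
  "uplus p q = {A. {n. {m. m + n \<in> A} \<in> p} \<in> q}"

fun fcomp_seq :: "(nat \<Rightarrow> 'a \<Rightarrow> 'a) \<Rightarrow> nat \<Rightarrow> 'a \<Rightarrow> 'a" where
  "fcomp_seq f 0 = id"
| "fcomp_seq f (Suc n) = f (Suc n) \<circ> fcomp_seq f n"

definition fcomp_ulim :: "(nat \<Rightarrow> 'a \<Rightarrow> 'a) \<Rightarrow> nat set set \<Rightarrow> 'a \<Rightarrow> 'a::topological_space" where
  "fcomp_ulim f r x = ulim r (\<lambda>n. fcomp_seq f n x)"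

end

theory Submission
  imports Defs
begin

definition islim :: "nat set set \<Rightarrow> (nat \<Rightarrow> 'a::topological_space) \<Rightarrow> 'a \<Rightarrow> bool" where
  "islim r s y \<longleftrightarrow> (\<forall>V. open V \<and> y \<in> V \<longrightarrow> {n. s n \<in> V} \<in> r)"

lemma uf_UNIV: "ultrafilter_nat r \<Longrightarrow> UNIV \<in> r" unfolding ultrafilter_nat_def by simp
lemma uf_empty: "ultrafilter_nat r \<Longrightarrow> {} \<notin> r" unfolding ultrafilter_nat_def by simp
lemma uf_mono: "ultrafilter_nat r \<Longrightarrow> A \<in> r \<Longrightarrow> A \<subseteq> B \<Longrightarrow> B \<in> r" unfolding ultrafilter_nat_def by simp
lemma uf_int: "ultrafilter_nat r \<Longrightarrow> A \<in> r \<Longrightarrow> B \<in> r \<Longrightarrow> A \<inter> B \<in> r" unfolding ultrafilter_nat_def by simp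
lemma uf_compl: "ultrafilter_nat r \<Longrightarrow> A \<notin> r \<Longrightarrow> - A \<in> r" unfolding ultrafilter_nat_def by blast

lemma islim_uniq:
  fixes s :: "nat \<Rightarrow> 'a::t2_space"
  assumes e: "{} \<notin> r" and i: "\<And>A B. A \<in> r \<Longrightarrow> B \<in> r \<Longrightarrow> A \<inter> B \<in> r"
    and y: "islim r s y" and z: "islim r s z"
  shows "y = z"
proof (rule ccontr)
  assume "y \<noteq> z"
  then obtain U W where "open U" "open W" "y \<in> U" "z \<in> W" "U \<inter> W = {}"
    by (metis hausdorff)
  have "{n. s n \<in> U} \<in> r" using y \<open>open U\<close> \<open>y \<in> U\<close> unfolding islim_def by blast
  moreover have "{n. s n \<in> W} \<in> r" using z \<open>open W\<close> \<open>z \<in> W\<close> unfolding islim_def by blast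
  ultimately
  have "{n. s n \<in> U} \<inter> {n. s n \<in> W} \<in> r" by (rule i)
  moreover have "{n. s n \<in> U} \<inter> {n. s n \<in> W} = {}" using \<open>U \<inter> W = {}\<close> by auto
  ultimately show False using e by simp
qed

lemma union_in_uf:
  assumes u: "ultrafilter_nat r" and fin: "finite F"
  shows "(\<Union>y\<in>F. G y) \<in> r \<Longrightarrow> \<exists>y\<in>F. G y \<in> r"
  using fin
proof (induction F rule: finite_induct)
  case empty
  then show ?case using uf_empty[OF u] by auto
next
  case (insert a F)
  show ?case
  proof (cases "G a \<in> r")
    case True then show ?thesis by auto
  next
    case False
    then have "- G a \<in> r" using uf_compl[OF u] by blast
    then have "(\<Union>y\<in>insert a F. G y) \<inter> - G a \<in> r" using insert.prems uf_int[OF u] by blast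
    moreover have "(\<Union>y\<in>insert a F. G y) \<inter> - G a \<subseteq> (\<Union>y\<in>F. G y)" by auto
    ultimately have "(\<Union>y\<in>F. G y) \<in> r" using uf_mono[OF u] by blast
    then show ?thesis using insert.IH by auto
  qed
qed

lemma islim_exists:
  fixes s :: "nat \<Rightarrow> 'a::topological_space"
  assumes u: "ultrafilter_nat r" and X: "compact X" and sX: "\<And>n. s n \<in> X"
  shows "\<exists>y\<in>X. islim r s y"
proof (rule ccontr)
  assume "\<not> ?thesis"
  then have "\<forall>y\<in>X. \<exists>V. open V \<and> y \<in> V \<and> {n. s n \<in> V} \<notin> r"
    unfolding islim_def by blast
  then obtain V where V: "\<And>y. y \<in> X \<Longrightarrow> open (V y) \<and> y \<in> V y \<and> {n. s n \<in> V y} \<notin> r"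
    by metis
  have "X \<subseteq> \<Union>(V ` X)" using V by blast
  then obtain F where F: "F \<subseteq> X" "finite F" "X \<subseteq> \<Union>(V ` F)"
    using compactE_image[OF X, of X V] V by blast
  have "(\<Union>y\<in>F. {n. s n \<in> V y}) = UNIV" using F sX by blast
  then have "(\<Union>y\<in>F. {n. s n \<in> V y}) \<in> r" using uf_UNIV[OF u] by simp
  then obtain y where "y \<in> F" "{n. s n \<in> V y} \<in> r" using union_in_uf[OF u F(2)] by blast
  then show False using V F(1) by blast
qed

lemma ulim_eq:
  fixes s :: "nat \<Rightarrow> 'a::t2_space"
  assumes e: "{} \<notin> r" and i: "\<And>A B. A \<in> r \<Longrightarrow> B \<in> r \<Longrightarrow> A \<inter> B \<in> r"
    and y: "islim r s y"
  shows "ulim r s = y"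
proof -
  have "ulim r s = (THE y. islim r s y)" unfolding ulim_def islim_def by (rule refl)
  also have "\<dots> = y"
  proof (rule the_equality)
    show "islim r s y" by (rule y)
    fix z assume "islim r s z"
    then show "z = y" using islim_uniq[OF e i _ y] by blast
  qed
  finally show ?thesis .
qed

lemma ulim_prop:
  fixes s :: "nat \<Rightarrow> 'a::t2_space"
  assumes u: "ultrafilter_nat r" and X: "compact X" and sX: "\<And>n. s n \<in> X"
  shows "ulim r s \<in> X \<and> islim r s (ulim r s)"
proof -
  obtain y where y: "y \<in> X" "islim r s y" proof -
    have "\<exists>y\<in>X. islim r s y" by (rule islim_exists[OF u X]) (rule sX)
    then show ?thesis using that by blast
  qed
  have e: "ulim r s = y" by (rule ulim_eq[OF uf_empty[OF u] uf_int[OF u] y(2)])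
  show ?thesis unfolding e using y by (rule conjI)
qed

lemma uplus_nat_uf:
  assumes u: "ultrafilter_nat p"
  shows "ultrafilter_nat (uplus_nat p n)"
proof -
  have c: "{m. m + n \<in> - A} = - {m. m + n \<in> A}" for A by auto
  have ii: "{m. m + n \<in> A \<inter> B} = {m. m + n \<in> A} \<inter> {m. m + n \<in> B}" for A B by auto
  show ?thesis unfolding ultrafilter_nat_def uplus_nat_def
  proof (intro conjI allI impI)
    show "UNIV \<in> {A. {m. m + n \<in> A} \<in> p}" using uf_UNIV[OF u] by simp
    show "{} \<notin> {A. {m. m + n \<in> A} \<in> p}" using uf_empty[OF u] by simp
    fix A B
    show "A \<in> {A. {m. m + n \<in> A} \<in> p} \<and> A \<subseteq> B \<Longrightarrow> B \<in> {A. {m. m + n \<in> A} \<in> p}"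
      using uf_mono[OF u, of "{m. m + n \<in> A}" "{m. m + n \<in> B}"] by auto
    show "A \<in> {A. {m. m + n \<in> A} \<in> p} \<and> B \<in> {A. {m. m + n \<in> A} \<in> p} \<Longrightarrow> A \<inter> B \<in> {A. {m. m + n \<in> A} \<in> p}"
      unfolding mem_Collect_eq ii using uf_int[OF u] by blast
  next
    fix A
    show "A \<in> {A. {m. m + n \<in> A} \<in> p} \<or> - A \<in> {A. {m. m + n \<in> A} \<in> p}"
      unfolding mem_Collect_eq c using uf_compl[OF u] by blast
  qed
qed

lemma fcomp_in:
  assumes "\<And>n. n \<ge> 1 \<Longrightarrow> f n ` X \<subseteq> X" "x \<in> X"
  shows "fcomp_seq f k x \<in> X"
  using assms by (induction k) auto

theorem lemma3p8:
  fixes X :: "'a::metric_space set" and f :: "nat \<Rightarrow> 'a \<Rightarrow> 'a"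
    and p q :: "nat set set" and x :: 'a
  assumes "compact X"
    and "\<And>n. n \<ge> 1 \<Longrightarrow> continuous_on X (f n)"
    and "\<And>n. n \<ge> 1 \<Longrightarrow> f n ` X \<subseteq> X"
    and "free_ultrafilter_nat p" and "free_ultrafilter_nat q"
    and "x \<in> X"
  shows "fcomp_ulim f (uplus p q) x = ulim q (\<lambda>n. fcomp_ulim f (uplus_nat p n) x)"
proof -
  define s where "s = (\<lambda>k. fcomp_seq f k x)"
  have sX: "\<And>k. s k \<in> X" unfolding s_def using fcomp_in[OF assms(3,6)] by simp
  have up: "ultrafilter_nat p" and uq: "ultrafilter_nat q"
    using assms(4,5) unfolding free_ultrafilter_nat_def by auto
  define y where "y = (\<lambda>n. ulim (uplus_nat p n) s)"
  have yP: "y n \<in> X \<and> islim (uplus_nat p n) s (y n)" for n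
    unfolding y_def by (rule ulim_prop[OF uplus_nat_uf[OF up] assms(1)]) (rule sX)
  have zP: "ulim q y \<in> X \<and> islim q y (ulim q y)"
    by (rule ulim_prop[OF uq assms(1)]) (use yP in blast)
  have e: "{} \<notin> uplus p q"
    using uf_empty[OF up] uf_empty[OF uq] unfolding uplus_def by auto
  have i: "A \<inter> B \<in> uplus p q" if "A \<in> uplus p q" "B \<in> uplus p q" for A B
  proof -
    have "{n. {m. m + n \<in> A} \<in> p} \<inter> {n. {m. m + n \<in> B} \<in> p} \<in> q"
      using that uf_int[OF uq] unfolding uplus_def by auto
    moreover have "{n. {m. m + n \<in> A} \<in> p} \<inter> {n. {m. m + n \<in> B} \<in> p}
        \<subseteq> {n. {m. m + n \<in> A \<inter> B} \<in> p}"
    proof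
      fix n assume "n \<in> {n. {m. m + n \<in> A} \<in> p} \<inter> {n. {m. m + n \<in> B} \<in> p}"
      then have "{m. m + n \<in> A} \<inter> {m. m + n \<in> B} \<in> p" using uf_int[OF up] by auto
      moreover have "{m. m + n \<in> A} \<inter> {m. m + n \<in> B} = {m. m + n \<in> A \<inter> B}" by auto
      ultimately show "n \<in> {n. {m. m + n \<in> A \<inter> B} \<in> p}" by simp
    qed
    ultimately show ?thesis using uf_mono[OF uq] unfolding uplus_def by blast
  qed
  have "islim (uplus p q) s (ulim q y)"
    unfolding islim_def
  proof (intro allI impI)
    fix V assume V: "open V \<and> ulim q y \<in> V"
    then have "{n. y n \<in> V} \<in> q" using zP unfolding islim_def by blast
    moreover have "{n. y n \<in> V} \<subseteq> {n. {m. m + n \<in> {k. s k \<in> V}} \<in> p}"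
      using yP V unfolding islim_def uplus_nat_def by auto
    ultimately show "{n. s n \<in> V} \<in> uplus p q"
      using uf_mono[OF uq] unfolding uplus_def by blast
  qed
  then have "ulim (uplus p q) s = ulim q y" using ulim_eq[OF e i] by blast
  then show ?thesis unfolding fcomp_ulim_def s_def y_def by simp
qed

end
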